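(* Let $G$ be a finite simple graph with at least one edge. Then $\mathrm{v}(I(G))\le\beta(G)$. Moreover, $\mathrm{v}(I(G))=\beta(G)$ if and only if every connected component of $G$ that has at least one edge is a star graph $K_{1,m}$ for some $m\ge1$.
   Context: For a graph $G$, $R=\mathbb{K}[V(G)]$ is the polynomial ring over a field $\mathbb{K}$ in the vertices, and $I(G)=(x_ix_j\mid\{x_i,x_j\}\in E(G))$ is the edge ideal. The v-number of a proper graded ideal $I\subseteq R$ is $\mathrm{v}(I)=\min\{d\ge0\mid\exists f\in R_d,\ \mathfrak p\in\mathrm{Ass}(I),\ I:(f)=\mathfrak p\}$. A vertex cover of $G$ is a set $C\subseteq V(G)$ meeting every edge; $\beta(G)$ is the minimum size of a vertex cover. The star graph $K_{1,m}$ has vertices $x_0,x_1,\ldots,x_m$ and edges $\{x_0,x_i\}$, $1\le i\le m$. *)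

theory Defs
  imports Main "HOL-Library.Poly_Mapping"
begin

text \<open>Polynomial ring K[V] in the variables of type 'v (the vertex type, assumed finite),
  represented as finitely supported maps from monomials (exponent vectors) to coefficients.\<close>

type_synonym ('v, 'k) mpoly = "('v \<Rightarrow>\<^sub>0 nat) \<Rightarrow>\<^sub>0 'k"

definition var :: "'v \<Rightarrow> ('v, 'k::comm_ring_1) mpoly" where
  "var x = Poly_Mapping.single (Poly_Mapping.single x 1) 1"

definition mon_deg :: "('v \<Rightarrow>\<^sub>0 nat) \<Rightarrow> nat" where
  "mon_deg m = (\<Sum>x\<in>Poly_Mapping.keys m. Poly_Mapping.lookup m x)"

text \<open>f lies in the homogeneous component R_d (0 included).\<close>
definition homogeneous_of_deg :: "nat \<Rightarrow> ('v, 'k::comm_ring_1) mpoly \<Rightarrow> bool" where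
  "homogeneous_of_deg d f \<longleftrightarrow> (\<forall>m\<in>Poly_Mapping.keys f. mon_deg m = d)"

definition is_ideal :: "'a::comm_ring_1 set \<Rightarrow> bool" where
  "is_ideal I \<longleftrightarrow> 0 \<in> I \<and> (\<forall>a\<in>I. \<forall>b\<in>I. a + b \<in> I) \<and> (\<forall>a\<in>I. \<forall>r. r * a \<in> I)"

definition ideal_gen :: "'a::comm_ring_1 set \<Rightarrow> 'a set" where
  "ideal_gen S = \<Inter>{I. is_ideal I \<and> S \<subseteq> I}"

definition prime_ideal :: "'a::comm_ring_1 set \<Rightarrow> bool" where
  "prime_ideal P \<longleftrightarrow> is_ideal P \<and> P \<noteq> UNIV \<and> (\<forall>a b. a * b \<in> P \<longrightarrow> a \<in> P \<or> b \<in> P)"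

definition colon :: "'a::comm_ring_1 set \<Rightarrow> 'a \<Rightarrow> 'a set" where
  "colon I f = {g. g * f \<in> I}"

text \<open>Associated primes of I (R is Noetherian): primes of the form I : (g).\<close>
definition Ass :: "'a::comm_ring_1 set \<Rightarrow> 'a set set" where
  "Ass I = {P. prime_ideal P \<and> (\<exists>g. colon I g = P)}"

definition v_number :: "('v, 'k::field) mpoly set \<Rightarrow> nat" where
  "v_number I = (LEAST d. \<exists>f P. homogeneous_of_deg d f \<and> P \<in> Ass I \<and> colon I f = P)"

definition simple_graph :: "'v set set \<Rightarrow> bool" where
  "simple_graph E \<longleftrightarrow> (\<forall>e\<in>E. card e = 2)"

definition edge_ideal :: "'v set set \<Rightarrow> ('v, 'k::field) mpoly set" where
  "edge_ideal E = ideal_gen {var x * var y | x y. {x, y} \<in> E \<and> x \<noteq> y}"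

definition vertex_cover :: "'v set set \<Rightarrow> 'v set \<Rightarrow> bool" where
  "vertex_cover E C \<longleftrightarrow> (\<forall>e\<in>E. e \<inter> C \<noteq> {})"

definition cover_number :: "'v set set \<Rightarrow> nat" where
  "cover_number E = (LEAST n. \<exists>C. vertex_cover E C \<and> card C = n)"

definition adj :: "'v set set \<Rightarrow> 'v \<Rightarrow> 'v \<Rightarrow> bool" where
  "adj E x y \<longleftrightarrow> {x, y} \<in> E \<and> x \<noteq> y"

definition component :: "'v set set \<Rightarrow> 'v \<Rightarrow> 'v set" where
  "component E v = {u. (adj E)\<^sup>*\<^sup>* v u}"

definition is_star_on :: "'v set set \<Rightarrow> 'v set \<Rightarrow> bool" where
  "is_star_on E S \<longleftrightarrow> (\<exists>c\<in>S. S - {c} \<noteq> {} \<and> (\<forall>x\<in>S - {c}. {c, x} \<in> E)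
       \<and> (\<forall>e\<in>E. e \<subseteq> S \<longrightarrow> c \<in> e))"

end

theory Submission imports Defs begin

lemma pm_expand:
  "f = (\<Sum>a\<in>Poly_Mapping.keys f. Poly_Mapping.single a (Poly_Mapping.lookup f a))"
proof (rule poly_mapping_eqI)
  fix k
  show "Poly_Mapping.lookup f k = Poly_Mapping.lookup (\<Sum>a\<in>Poly_Mapping.keys f. Poly_Mapping.single a (Poly_Mapping.lookup f a)) k"
    by (simp add: lookup_sum lookup_single when_def in_keys_iff)
qed

lemma lookup_single_if: "Poly_Mapping.lookup (Poly_Mapping.single k v) k' = (if k = k' then v else 0)"
  by (simp add: lookup_single when_def)

lemma mpoly_no_zero_divisors:
  fixes f g :: "('v::finite \<Rightarrow>\<^sub>0 nat) \<Rightarrow>\<^sub>0 'k::idom"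
  assumes f0: "f \<noteq> 0" and g0: "g \<noteq> 0"
  shows "f * g \<noteq> 0"
proof -
  obtain enc :: "'v \<Rightarrow> nat" and n where "enc ` UNIV = {i. i < n}" "inj_on enc UNIV"
    using finite_imp_inj_to_nat_seg[OF finite_UNIV] by blast
  then have inj: "inj enc" by simp
  define \<psi> :: "('v \<Rightarrow>\<^sub>0 nat) \<Rightarrow> (nat \<Rightarrow>\<^sub>0 nat)" where
    "\<psi> m = (\<Sum>x\<in>UNIV. Poly_Mapping.single (enc x) (Poly_Mapping.lookup m x))" for m
  have lk: "Poly_Mapping.lookup (\<psi> m) (enc x) = Poly_Mapping.lookup m x" for m x
  proof -
    have "Poly_Mapping.lookup (\<psi> m) (enc x) = (\<Sum>y\<in>UNIV. if y = x then Poly_Mapping.lookup m y else 0)"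
      unfolding \<psi>_def lookup_sum lookup_single_if
      by (rule sum.cong) (auto dest: injD[OF inj])
    then show ?thesis by simp
  qed
  have add: "\<psi> (a + b) = \<psi> a + \<psi> b" for a b
    unfolding \<psi>_def by (simp add: lookup_add single_add sum.distrib)
  have injpsi: "\<psi> a = \<psi> b \<Longrightarrow> a = b" for a b
    by (rule poly_mapping_eqI) (metis lk)
  define F where "F = Poly_Mapping.keys f"
  define G where "G = Poly_Mapping.keys g"
  have F: "finite F" "F \<noteq> {}" using f0 by (auto simp: F_def)
  have G: "finite G" "G \<noteq> {}" using g0 by (auto simp: G_def)
  obtain a0 where a0: "a0 \<in> F" "\<And>a. a \<in> F \<Longrightarrow> \<psi> a \<le> \<psi> a0"
  proof -
    have "Max (\<psi> ` F) \<in> \<psi> ` F" using F by simp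
    then obtain a0 where "a0 \<in> F" "\<psi> a0 = Max (\<psi> ` F)" by auto
    then show ?thesis using that F by auto
  qed
  obtain b0 where b0: "b0 \<in> G" "\<And>b. b \<in> G \<Longrightarrow> \<psi> b \<le> \<psi> b0"
  proof -
    have "Max (\<psi> ` G) \<in> \<psi> ` G" using G by simp
    then obtain b0 where "b0 \<in> G" "\<psi> b0 = Max (\<psi> ` G)" by auto
    then show ?thesis using that G by auto
  qed
  have uniq: "a = a0 \<and> b = b0" if "a \<in> F" "b \<in> G" "a + b = a0 + b0" for a b
  proof -
    have e: "\<psi> a + \<psi> b = \<psi> a0 + \<psi> b0" using that add by metis
    have "\<psi> a = \<psi> a0"
    proof (rule ccontr)
      assume "\<psi> a \<noteq> \<psi> a0"
      then have "\<psi> a < \<psi> a0" using a0 that by (simp add: order_less_le)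
      then have "\<psi> a + \<psi> b < \<psi> a0 + \<psi> b0" using b0 that by (intro add_less_le_mono) auto
      then show False using e by simp
    qed
    then have "a = a0" by (rule injpsi)
    moreover then have "b = b0" using that by simp
    ultimately show ?thesis by simp
  qed
  have prod: "f * g = (\<Sum>a\<in>F. \<Sum>b\<in>G. Poly_Mapping.single (a + b) (Poly_Mapping.lookup f a * Poly_Mapping.lookup g b))"
  proof -
    have "f * g = (\<Sum>a\<in>F. Poly_Mapping.single a (Poly_Mapping.lookup f a)) * (\<Sum>b\<in>G. Poly_Mapping.single b (Poly_Mapping.lookup g b))"
      unfolding F_def G_def using pm_expand[of f] pm_expand[of g] by metis
    also have "\<dots> = (\<Sum>a\<in>F. \<Sum>b\<in>G. Poly_Mapping.single a (Poly_Mapping.lookup f a) * Poly_Mapping.single b (Poly_Mapping.lookup g b))"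
      by (rule sum_product)
    finally show ?thesis by (simp only: mult_single)
  qed
  have "Poly_Mapping.lookup (f * g) (a0 + b0) = (\<Sum>a\<in>F. if a = a0 then (\<Sum>b\<in>G. if b = b0 then Poly_Mapping.lookup f a * Poly_Mapping.lookup g b else 0) else 0)"
    unfolding prod lookup_sum lookup_single_if
    by (intro sum.cong refl) (use uniq in \<open>auto intro!: sum.neutral\<close>)
  also have "\<dots> = Poly_Mapping.lookup f a0 * Poly_Mapping.lookup g b0"
    using F G a0 b0 by (simp add: sum.delta')
  also have "\<dots> \<noteq> 0" using a0 b0 by (simp add: F_def G_def in_keys_iff)
  finally show ?thesis by auto
qed


definition mdvd :: "('v \<Rightarrow>\<^sub>0 nat) \<Rightarrow> ('v \<Rightarrow>\<^sub>0 nat) \<Rightarrow> bool" where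
  "mdvd g m \<longleftrightarrow> (\<forall>x. Poly_Mapping.lookup g x \<le> Poly_Mapping.lookup m x)"

definition mideal :: "('v \<Rightarrow>\<^sub>0 nat) set \<Rightarrow> ('v, 'k::comm_ring_1) mpoly set" where
  "mideal M = {f. \<forall>m\<in>Poly_Mapping.keys f. \<exists>g\<in>M. mdvd g m}"

lemma mdvd_add: "mdvd g m \<Longrightarrow> mdvd g (a + m)"
  unfolding mdvd_def lookup_add by (metis trans_le_add2)

lemma is_ideal_mideal: "is_ideal (mideal M :: ('v,'k::comm_ring_1) mpoly set)"
  unfolding is_ideal_def
proof (intro conjI ballI allI)
  show "0 \<in> mideal M" by (simp add: mideal_def)
next
  fix a b :: "('v,'k) mpoly" assume "a \<in> mideal M" "b \<in> mideal M"
  then show "a + b \<in> mideal M" using keys_add[of a b] by (auto simp: mideal_def)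
next
  fix a r :: "('v,'k) mpoly" assume a: "a \<in> mideal M"
  show "r * a \<in> mideal M" unfolding mideal_def
  proof (intro CollectI ballI)
    fix m assume "m \<in> Poly_Mapping.keys (r * a)"
    then obtain p q where "m = p + q" "q \<in> Poly_Mapping.keys a" using keys_mult[of r a] by blast
    moreover obtain g where "g \<in> M" "mdvd g q" using a \<open>q \<in> Poly_Mapping.keys a\<close> by (auto simp: mideal_def)
    ultimately show "\<exists>g\<in>M. mdvd g m" using mdvd_add by blast
  qed
qed

lemma ideal_sum: assumes "is_ideal I" "finite A" "\<And>x. x \<in> A \<Longrightarrow> h x \<in> I" shows "sum h A \<in> I"
  using assms(2,3) by (induction A rule: finite_induct) (use assms(1) in \<open>auto simp: is_ideal_def\<close>)

lemma ideal_diff: "is_ideal I \<Longrightarrow> a \<in> I \<Longrightarrow> b \<in> I \<Longrightarrow> a - b \<in> I"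
proof -
  assume I: "is_ideal I" and a: "a \<in> I" and b: "b \<in> I"
  have "(-1) * b \<in> I" using I b unfolding is_ideal_def by blast
  then have "a + (-1) * b \<in> I" using I a unfolding is_ideal_def by blast
  then show ?thesis by simp
qed

lemma ideal_mult_right: "is_ideal I \<Longrightarrow> a \<in> I \<Longrightarrow> a * r \<in> I"
  by (metis is_ideal_def mult.commute)

lemma ideal_gen_mideal:
  "ideal_gen ((\<lambda>g. Poly_Mapping.single g (1::'k::comm_ring_1)) ` M) = (mideal M :: ('v,'k) mpoly set)"
proof
  show "ideal_gen ((\<lambda>g. Poly_Mapping.single g (1::'k)) ` M) \<subseteq> mideal M"
    unfolding ideal_gen_def
    by (rule Inter_lower, rule CollectI, rule conjI[OF is_ideal_mideal]) (auto simp: mideal_def mdvd_def)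
next
  show "mideal M \<subseteq> ideal_gen ((\<lambda>g. Poly_Mapping.single g (1::'k)) ` M)"
  proof
    fix f :: "('v,'k) mpoly" assume f: "f \<in> mideal M"
    show "f \<in> ideal_gen ((\<lambda>g. Poly_Mapping.single g (1::'k)) ` M)"
      unfolding ideal_gen_def
    proof (rule InterI)
      fix I assume "I \<in> {I. is_ideal I \<and> (\<lambda>g. Poly_Mapping.single g (1::'k)) ` M \<subseteq> I}"
      then have I: "is_ideal I" and gI: "\<And>g. g \<in> M \<Longrightarrow> Poly_Mapping.single g 1 \<in> I" by auto
      have "(\<Sum>a\<in>Poly_Mapping.keys f. Poly_Mapping.single a (Poly_Mapping.lookup f a)) \<in> I"
      proof (rule ideal_sum[OF I finite_keys])
        fix m assume "m \<in> Poly_Mapping.keys f"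
        then obtain g where g: "g \<in> M" "mdvd g m" using f by (auto simp: mideal_def)
        have "(m - g) + g = m"
          by (rule poly_mapping_eqI) (use g(2) in \<open>simp add: lookup_add lookup_minus mdvd_def\<close>)
        then have "Poly_Mapping.single m (Poly_Mapping.lookup f m) = Poly_Mapping.single (m - g) (Poly_Mapping.lookup f m) * Poly_Mapping.single g 1"
          by (simp add: mult_single)
        also have "\<dots> \<in> I" using I gI[OF g(1)] by (auto simp: is_ideal_def)
        finally show "Poly_Mapping.single m (Poly_Mapping.lookup f m) \<in> I" .
      qed
      then show "f \<in> I" using pm_expand[of f] by simp
    qed
  qed
qed

definition trunc :: "(('v \<Rightarrow>\<^sub>0 nat) \<Rightarrow> bool) \<Rightarrow> ('v, 'k::comm_ring_1) mpoly \<Rightarrow> ('v, 'k) mpoly" where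
  "trunc Q a = (\<Sum>m\<in>{m\<in>Poly_Mapping.keys a. Q m}. Poly_Mapping.single m (Poly_Mapping.lookup a m))"

lemma lookup_trunc: "Poly_Mapping.lookup (trunc Q a) k = (if Q k then Poly_Mapping.lookup a k else 0)"
  unfolding trunc_def lookup_sum lookup_single_if
  by (simp add: sum.delta in_keys_iff)

lemma keys_trunc: "Poly_Mapping.keys (trunc Q a) \<subseteq> {m. Q m}"
  by (auto simp: in_keys_iff lookup_trunc split: if_splits)

lemma trunc_split: "a = trunc Q a + trunc (\<lambda>m. \<not> Q m) a"
  by (rule poly_mapping_eqI) (simp add: lookup_add lookup_trunc)

definition vars_ideal :: "'v set \<Rightarrow> ('v, 'k::comm_ring_1) mpoly set" where
  "vars_ideal S = mideal ((\<lambda>x. Poly_Mapping.single x 1) ` S)"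

lemma mdvd_single: "mdvd (Poly_Mapping.single x 1) m \<longleftrightarrow> x \<in> Poly_Mapping.keys m"
  by (auto simp: mdvd_def lookup_single_if in_keys_iff)

lemma mdvd_single': "mdvd (Poly_Mapping.single x (Suc 0)) m \<longleftrightarrow> x \<in> Poly_Mapping.keys m"
  using mdvd_single[of x m] by simp

lemma vars_ideal_iff: "f \<in> vars_ideal S \<longleftrightarrow> (\<forall>m\<in>Poly_Mapping.keys f. \<exists>x\<in>S. x \<in> Poly_Mapping.keys m)"
  unfolding vars_ideal_def mideal_def by (auto simp: mdvd_single')

lemma prime_vars_ideal: "prime_ideal (vars_ideal S :: ('v::finite, 'k::field) mpoly set)"
  unfolding prime_ideal_def
proof (intro conjI allI impI)
  show I: "is_ideal (vars_ideal S :: ('v, 'k) mpoly set)" by (simp add: vars_ideal_def is_ideal_mideal)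
  have "(1 :: ('v, 'k) mpoly) \<notin> vars_ideal S" by (simp add: vars_ideal_iff)
  then show "vars_ideal S \<noteq> (UNIV :: ('v, 'k) mpoly set)" by auto
  fix a b :: "('v, 'k) mpoly"
  assume ab: "a * b \<in> vars_ideal S"
  define Q where "Q m = (\<forall>x\<in>S. Poly_Mapping.lookup m x = 0)" for m :: "'v \<Rightarrow>\<^sub>0 nat"
  have notQ: "trunc (\<lambda>m. \<not> Q m) c \<in> vars_ideal S" for c :: "('v, 'k) mpoly"
    unfolding vars_ideal_iff
  proof
    fix m assume "m \<in> Poly_Mapping.keys (trunc (\<lambda>m. \<not> Q m) c)"
    then have "\<not> Q m" using keys_trunc[of "\<lambda>m. \<not> Q m" c] by auto
    then show "\<exists>x\<in>S. x \<in> Poly_Mapping.keys m" unfolding Q_def by (auto simp: in_keys_iff)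
  qed
  have Qz: "c = 0" if cI: "c \<in> vars_ideal S" and cQ: "\<And>m. m \<in> Poly_Mapping.keys c \<Longrightarrow> Q m" for c :: "('v, 'k) mpoly"
  proof -
    have "Poly_Mapping.keys c = {}"
    proof (rule ccontr)
      assume "Poly_Mapping.keys c \<noteq> {}"
      then obtain m where m: "m \<in> Poly_Mapping.keys c" by blast
      then obtain x where "x \<in> S" "x \<in> Poly_Mapping.keys m" using cI unfolding vars_ideal_iff by blast
      moreover have "Q m" using cQ m by blast
      ultimately show False unfolding Q_def by (simp add: in_keys_iff)
    qed
    then show ?thesis by simp
  qed
  show "a \<in> vars_ideal S \<or> b \<in> vars_ideal S"
  proof (rule ccontr)
    assume "\<not> ?thesis"
    then have na: "a \<notin> vars_ideal S" and nb: "b \<notin> vars_ideal S" by auto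
    define a1 where "a1 = trunc (\<lambda>m. \<not> Q m) a"
    define a2 where "a2 = trunc Q a"
    define b1 where "b1 = trunc (\<lambda>m. \<not> Q m) b"
    define b2 where "b2 = trunc Q b"
    have sa: "a = a2 + a1" unfolding a1_def a2_def by (rule trunc_split)
    have sb: "b = b2 + b1" unfolding b1_def b2_def by (rule trunc_split)
    have a1I: "a1 \<in> vars_ideal S" unfolding a1_def by (rule notQ)
    have b1I: "b1 \<in> vars_ideal S" unfolding b1_def by (rule notQ)
    have a2: "a2 \<noteq> 0"
    proof
      assume "a2 = 0" then have "a = a1" using sa by simp
      then show False using na a1I by simp
    qed
    have b2: "b2 \<noteq> 0"
    proof
      assume "b2 = 0" then have "b = b1" using sb by simp
      then show False using nb b1I by simp
    qed
    have eq: "a2 * b2 = a * b - a1 * b - a2 * b1"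
      unfolding sa sb by (simp add: algebra_simps)
    have t1: "a1 * b \<in> vars_ideal S" by (rule ideal_mult_right[OF I a1I])
    have t2: "a2 * b1 \<in> vars_ideal S" using I b1I unfolding is_ideal_def by blast
    have "a2 * b2 \<in> vars_ideal S"
      unfolding eq by (rule ideal_diff[OF I ideal_diff[OF I ab t1] t2])
    moreover have "Q m" if mk: "m \<in> Poly_Mapping.keys (a2 * b2)" for m
    proof -
      obtain p q where pq: "m = p + q" "p \<in> Poly_Mapping.keys a2" "q \<in> Poly_Mapping.keys b2"
        using keys_mult[of a2 b2] mk by blast
      then have "Q p" "Q q" using keys_trunc[of Q a] keys_trunc[of Q b] unfolding a2_def b2_def by auto
      then show ?thesis unfolding pq(1) Q_def by (simp add: lookup_add)
    qed
    ultimately have "a2 * b2 = 0" by (rule Qz)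
    then show False using mpoly_no_zero_divisors[OF a2 b2] by simp
  qed
qed

lemma lookup_mult_single: "Poly_Mapping.lookup ((g::('v,'k::comm_ring_1) mpoly) * Poly_Mapping.single a (1::'k::comm_ring_1)) (m + a) = Poly_Mapping.lookup g m"
proof -
  have "g * Poly_Mapping.single a (1::'k) = (\<Sum>p\<in>Poly_Mapping.keys g. Poly_Mapping.single p (Poly_Mapping.lookup g p) * Poly_Mapping.single a 1)"
    by (subst pm_expand[of g]) (simp add: sum_distrib_right)
  then have "Poly_Mapping.lookup (g * Poly_Mapping.single a (1::'k)) (m + a) = (\<Sum>p\<in>Poly_Mapping.keys g. if p = m then Poly_Mapping.lookup g p else 0)"
    by (simp add: mult_single lookup_sum lookup_single_if)
  then show ?thesis by (simp add: add_right_cancel sum.delta in_keys_iff)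
qed

lemma keys_mult_single: "Poly_Mapping.keys ((g::('v,'k::comm_ring_1) mpoly) * Poly_Mapping.single a (1::'k::comm_ring_1)) = (\<lambda>m. m + a) ` Poly_Mapping.keys g"
proof
  show "Poly_Mapping.keys (g * Poly_Mapping.single a (1::'k)) \<subseteq> (\<lambda>m. m + a) ` Poly_Mapping.keys g"
    using keys_mult[of g "Poly_Mapping.single a (1::'k)"] by auto
  show "(\<lambda>m. m + a) ` Poly_Mapping.keys g \<subseteq> Poly_Mapping.keys (g * Poly_Mapping.single a (1::'k))"
    by (auto simp: in_keys_iff lookup_mult_single)
qed

definition EM :: "'v set set \<Rightarrow> ('v \<Rightarrow>\<^sub>0 nat) set" where
  "EM E = {Poly_Mapping.single x 1 + Poly_Mapping.single y 1 | x y. {x, y} \<in> E \<and> x \<noteq> y}"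

lemma edge_ideal_mideal: "edge_ideal E = (mideal (EM E) :: ('v, 'k::field) mpoly set)"
proof -
  have vx: "var x * var y = Poly_Mapping.single (Poly_Mapping.single x 1 + Poly_Mapping.single y 1) (1::'k)" for x y :: 'v
    by (simp add: var_def mult_single)
  have "{var x * var y | x y. {x, y} \<in> E \<and> x \<noteq> y} = (\<lambda>g. Poly_Mapping.single g (1::'k)) ` EM E"
    unfolding vx EM_def by blast
  then show ?thesis unfolding edge_ideal_def by (simp add: ideal_gen_mideal)
qed

lemma mdvd_edge: "x \<noteq> y \<Longrightarrow> mdvd (Poly_Mapping.single x 1 + Poly_Mapping.single y 1) m \<longleftrightarrow> x \<in> Poly_Mapping.keys m \<and> y \<in> Poly_Mapping.keys m"
proof -
  assume xy: "x \<noteq> y"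
  have L: "Poly_Mapping.lookup (Poly_Mapping.single x 1 + Poly_Mapping.single y 1) z = (if z = x then 1 else 0) + (if z = y then 1 else 0)" for z :: 'a
    by (auto simp: lookup_add lookup_single_if)
  show ?thesis
  proof
    assume h: "mdvd (Poly_Mapping.single x 1 + Poly_Mapping.single y 1) m"
    have "1 \<le> Poly_Mapping.lookup m x" "1 \<le> Poly_Mapping.lookup m y"
      using h[unfolded mdvd_def, rule_format, of x] h[unfolded mdvd_def, rule_format, of y] xy by (simp_all add: lookup_add lookup_single_if)
    then show "x \<in> Poly_Mapping.keys m \<and> y \<in> Poly_Mapping.keys m" by (simp add: in_keys_iff)
  next
    assume "x \<in> Poly_Mapping.keys m \<and> y \<in> Poly_Mapping.keys m"
    then have "Poly_Mapping.lookup m x \<noteq> 0" "Poly_Mapping.lookup m y \<noteq> 0" by (simp_all add: in_keys_iff)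
    then show "mdvd (Poly_Mapping.single x 1 + Poly_Mapping.single y 1) m"
      unfolding mdvd_def L using xy by auto
  qed
qed

lemma EM_dvd: "(\<exists>g\<in>EM E. mdvd g m) \<longleftrightarrow> (\<exists>x y. {x, y} \<in> E \<and> x \<noteq> y \<and> x \<in> Poly_Mapping.keys m \<and> y \<in> Poly_Mapping.keys m)"
proof
  assume "\<exists>g\<in>EM E. mdvd g m"
  then obtain x y where xy: "{x, y} \<in> E" "x \<noteq> y" "mdvd (Poly_Mapping.single x 1 + Poly_Mapping.single y 1) m"
    unfolding EM_def by blast
  then have "x \<in> Poly_Mapping.keys m \<and> y \<in> Poly_Mapping.keys m" using mdvd_edge[OF xy(2)] by blast
  then show "\<exists>x y. {x, y} \<in> E \<and> x \<noteq> y \<and> x \<in> Poly_Mapping.keys m \<and> y \<in> Poly_Mapping.keys m" using xy by blast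
next
  assume "\<exists>x y. {x, y} \<in> E \<and> x \<noteq> y \<and> x \<in> Poly_Mapping.keys m \<and> y \<in> Poly_Mapping.keys m"
  then obtain x y where xy: "{x, y} \<in> E" "x \<noteq> y" "x \<in> Poly_Mapping.keys m" "y \<in> Poly_Mapping.keys m" by blast
  then have "mdvd (Poly_Mapping.single x 1 + Poly_Mapping.single y 1) m" using mdvd_edge[OF xy(2)] by blast
  moreover have "Poly_Mapping.single x 1 + Poly_Mapping.single y 1 \<in> EM E" unfolding EM_def using xy by blast
  ultimately show "\<exists>g\<in>EM E. mdvd g m" by blast
qed

lemma edge_ideal_iff: "f \<in> (edge_ideal E :: ('v, 'k::field) mpoly set) \<longleftrightarrow>
   (\<forall>m\<in>Poly_Mapping.keys f. \<exists>x y. {x, y} \<in> E \<and> x \<noteq> y \<and> x \<in> Poly_Mapping.keys m \<and> y \<in> Poly_Mapping.keys m)"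
  unfolding edge_ideal_mideal mideal_def mem_Collect_eq EM_dvd ..

lemma keys_add_nat: "Poly_Mapping.keys (m + n :: 'v \<Rightarrow>\<^sub>0 nat) = Poly_Mapping.keys m \<union> Poly_Mapping.keys n"
  by (auto simp: in_keys_iff lookup_add)

definition mA :: "'v set \<Rightarrow> ('v \<Rightarrow>\<^sub>0 nat)" where
  "mA A = (\<Sum>x\<in>A. Poly_Mapping.single x 1)"

lemma lookup_mA: "finite A \<Longrightarrow> Poly_Mapping.lookup (mA A) z = (if z \<in> A then 1 else 0)"
  unfolding mA_def lookup_sum lookup_single_if by (simp add: sum.delta)

lemma keys_mA: "finite A \<Longrightarrow> Poly_Mapping.keys (mA A) = A"
  by (auto simp: in_keys_iff lookup_mA split: if_splits)

lemma mon_deg_mA: "finite A \<Longrightarrow> mon_deg (mA A) = card A"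
  unfolding mon_deg_def by (simp add: keys_mA lookup_mA)

lemma mon_deg_ge: "card (Poly_Mapping.keys u) \<le> mon_deg u"
proof -
  have "card (Poly_Mapping.keys u) = (\<Sum>x\<in>Poly_Mapping.keys u. 1)" by simp
  also have "\<dots> \<le> mon_deg u" unfolding mon_deg_def
    by (rule sum_mono) (simp add: in_keys_iff Suc_le_eq)
  finally show ?thesis .
qed

lemma colon_indep:
  fixes E :: "('v::finite) set set"
  assumes indep: "\<forall>x\<in>A. \<forall>y\<in>A. \<not> adj E x y"
    and cover: "vertex_cover E {v. \<exists>a\<in>A. adj E v a}"
  shows "colon (edge_ideal E :: ('v, 'k::field) mpoly set) (Poly_Mapping.single (mA A) 1) = vars_ideal {v. \<exists>a\<in>A. adj E v a}"
proof -
  let ?N = "{v. \<exists>a\<in>A. adj E v a}"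
  have kA: "Poly_Mapping.keys (mA A) = A" by (simp add: keys_mA)
  have key: "(\<exists>x y. {x, y} \<in> E \<and> x \<noteq> y \<and> x \<in> K \<union> A \<and> y \<in> K \<union> A) \<longleftrightarrow> (\<exists>v\<in>?N. v \<in> K)" for K
  proof
    assume "\<exists>x y. {x, y} \<in> E \<and> x \<noteq> y \<and> x \<in> K \<union> A \<and> y \<in> K \<union> A"
    then obtain x y where xy: "{x, y} \<in> E" "x \<noteq> y" "x \<in> K \<union> A" "y \<in> K \<union> A" by blast
    have yx: "{y, x} \<in> E" using xy by (simp add: insert_commute)
    show "\<exists>v\<in>?N. v \<in> K"
    proof (cases "x \<in> A")
      case True
      then have "y \<notin> A" using indep xy by (auto simp: adj_def)
      then show ?thesis using True xy yx by (auto simp: adj_def)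
    next
      case False
      show ?thesis
      proof (cases "y \<in> A")
        case True
        then show ?thesis using False xy by (auto simp: adj_def)
      next
        case False2: False
        have "{x, y} \<inter> ?N \<noteq> {}" using cover xy unfolding vertex_cover_def by blast
        then show ?thesis using False False2 xy by blast
      qed
    qed
  next
    assume "\<exists>v\<in>?N. v \<in> K"
    then obtain v a where "a \<in> A" "adj E v a" "v \<in> K" by blast
    then show "\<exists>x y. {x, y} \<in> E \<and> x \<noteq> y \<and> x \<in> K \<union> A \<and> y \<in> K \<union> A"
      by (auto simp: adj_def)
  qed
  show ?thesis
  proof (rule set_eqI)
    fix g :: "('v, 'k) mpoly"
    have "g \<in> colon (edge_ideal E) (Poly_Mapping.single (mA A) 1) \<longleftrightarrow>
      (\<forall>m\<in>Poly_Mapping.keys g. \<exists>x y. {x, y} \<in> E \<and> x \<noteq> y \<and> x \<in> Poly_Mapping.keys m \<union> A \<and> y \<in> Poly_Mapping.keys m \<union> A)"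
      unfolding colon_def mem_Collect_eq edge_ideal_iff keys_mult_single
      by (simp add: keys_add_nat kA)
    also have "\<dots> \<longleftrightarrow> g \<in> vars_ideal ?N"
      unfolding vars_ideal_iff key by blast
    finally show "g \<in> colon (edge_ideal E) (Poly_Mapping.single (mA A) 1) \<longleftrightarrow> g \<in> vars_ideal ?N" .
  qed
qed

lemma colon_lower:
  fixes E :: "('v::finite) set set" and f :: "('v, 'k::field) mpoly"
  assumes sg: "simple_graph E" and P: "prime_ideal (colon (edge_ideal E) f)"
  shows "\<exists>u\<in>Poly_Mapping.keys f. \<exists>T. vertex_cover E T \<and> (\<forall>x\<in>T. \<exists>q. adj E x q \<and> q \<in> Poly_Mapping.keys u)"
proof -
  let ?I = "edge_ideal E :: ('v, 'k) mpoly set"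
  let ?P = "colon ?I f"
  have I: "is_ideal ?I" by (simp add: edge_ideal_mideal is_ideal_mideal)
  have "f \<notin> ?I"
  proof
    assume "f \<in> ?I"
    then have "?P = UNIV" using I by (auto simp: colon_def is_ideal_def)
    then show False using P by (simp add: prime_ideal_def)
  qed
  then obtain u where u: "u \<in> Poly_Mapping.keys f"
    and nu: "\<not> (\<exists>x y. {x, y} \<in> E \<and> x \<noteq> y \<and> x \<in> Poly_Mapping.keys u \<and> y \<in> Poly_Mapping.keys u)"
    unfolding edge_ideal_iff by blast
  define T where "T = {x. var x \<in> ?P}"
  have "vertex_cover E T" unfolding vertex_cover_def
  proof
    fix e assume "e \<in> E"
    then obtain x y where e: "e = {x, y}" "x \<noteq> y" using sg by (auto simp: simple_graph_def card_2_iff)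
    have "var x * var y \<in> ?I"
      unfolding edge_ideal_def ideal_gen_def using \<open>e \<in> E\<close> e by blast
    then have "var x * var y \<in> ?P" unfolding colon_def using ideal_mult_right[OF I] by blast
    then have "var x \<in> ?P \<or> var y \<in> ?P" using P by (simp add: prime_ideal_def)
    then show "e \<inter> T \<noteq> {}" using e by (auto simp: T_def)
  qed
  moreover have "\<exists>q. adj E x q \<and> q \<in> Poly_Mapping.keys u" if "x \<in> T" for x
  proof -
    have "var x * f \<in> ?I" using that by (simp add: T_def colon_def mult.commute)
    moreover have "var x * f = f * Poly_Mapping.single (Poly_Mapping.single x 1) (1::'k)"
      by (simp add: var_def mult.commute)
    moreover have "u + Poly_Mapping.single x 1 \<in> Poly_Mapping.keys (f * Poly_Mapping.single (Poly_Mapping.single x 1) (1::'k))"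
      unfolding keys_mult_single using u by blast
    ultimately have "\<exists>p q. {p, q} \<in> E \<and> p \<noteq> q \<and> p \<in> Poly_Mapping.keys (u + Poly_Mapping.single x 1) \<and> q \<in> Poly_Mapping.keys (u + Poly_Mapping.single x 1)"
      unfolding edge_ideal_iff by metis
    then obtain p q where pq: "{p, q} \<in> E" "p \<noteq> q" "p \<in> Poly_Mapping.keys u \<union> {x}" "q \<in> Poly_Mapping.keys u \<union> {x}"
      unfolding keys_add_nat by auto
    show ?thesis
    proof (cases "p \<in> Poly_Mapping.keys u")
      case True
      then have "q = x" "q \<notin> Poly_Mapping.keys u" using nu pq by blast+
      then show ?thesis using True pq by (auto simp: adj_def insert_commute)
    next
      case False
      then have "p = x" using pq by blast
      then show ?thesis using False pq by (auto simp: adj_def)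
    qed
  qed
  ultimately show ?thesis using u by blast
qed

definition indep :: "'v set set \<Rightarrow> 'v set \<Rightarrow> bool" where
  "indep E A \<longleftrightarrow> (\<forall>x\<in>A. \<forall>y\<in>A. \<not> adj E x y)"

definition nbr :: "'v set set \<Rightarrow> 'v set \<Rightarrow> 'v set" where
  "nbr E A = {v. \<exists>a\<in>A. adj E v a}"

lemma adj_sym: "adj E x y \<Longrightarrow> adj E y x"
  by (auto simp: adj_def insert_commute)

lemma adj_irrefl: "\<not> adj E x x"
  by (simp add: adj_def)

lemma edge_cases: "simple_graph E \<Longrightarrow> e \<in> E \<Longrightarrow> \<exists>x y. e = {x, y} \<and> adj E x y"
proof -
  assume "simple_graph E" "e \<in> E"
  then obtain x y where "e = {x, y}" "x \<noteq> y" by (auto simp: simple_graph_def card_2_iff)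
  then show ?thesis using \<open>e \<in> E\<close> by (auto simp: adj_def)
qed

lemma construct:
  fixes E :: "('v::finite) set set"
  assumes sg: "simple_graph E" and C: "vertex_cover E C" and CD: "C \<subseteq> D"
    and BD: "B \<subseteq> D" and B: "indep E B"
  shows "\<exists>A. B \<subseteq> A \<and> A \<subseteq> D \<and> indep E A \<and> vertex_cover E (nbr E A)"
proof -
  let ?F = "{A. B \<subseteq> A \<and> A \<subseteq> D \<and> indep E A}"
  have fin: "finite ?F" by simp
  have ne: "?F \<noteq> {}" using BD B by blast
  from finite_has_maximal[OF fin ne] obtain A where A: "A \<in> ?F" and maxA: "\<forall>b\<in>?F. A \<le> b \<longrightarrow> A = b"
    by (elim bexE)
  have max: "A = A'" if "A' \<in> ?F" "A \<subseteq> A'" for A' using maxA that by blast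
  have dom: "\<exists>a\<in>A. adj E u a" if "u \<in> D" "u \<notin> A" for u
  proof (rule ccontr)
    assume na: "\<not> ?thesis"
    have "indep E (insert u A)" unfolding indep_def
    proof (intro ballI)
      fix x y assume "x \<in> insert u A" "y \<in> insert u A"
      then show "\<not> adj E x y" using A na adj_irrefl[of E u] adj_sym[of E x y] by (auto simp: indep_def)
    qed
    then have "insert u A \<in> ?F" using A that by auto
    then show False using max[of "insert u A"] that by auto
  qed
  have "vertex_cover E (nbr E A)" unfolding vertex_cover_def
  proof
    fix e assume "e \<in> E"
    then obtain x y where e: "e = {x, y}" "adj E x y" using edge_cases[OF sg] by blast
    have "x \<in> C \<or> y \<in> C" using C \<open>e \<in> E\<close> e by (auto simp: vertex_cover_def)
    then show "e \<inter> nbr E A \<noteq> {}"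
    proof
      assume "x \<in> C"
      show ?thesis
      proof (cases "x \<in> A")
        case True then have "y \<in> nbr E A" using e adj_sym[of E x y] by (auto simp: nbr_def)
        then show ?thesis using e by auto
      next
        case False then have "x \<in> nbr E A" using dom \<open>x \<in> C\<close> CD by (auto simp: nbr_def)
        then show ?thesis using e by auto
      qed
    next
      assume "y \<in> C"
      show ?thesis
      proof (cases "y \<in> A")
        case True then have "x \<in> nbr E A" using e by (auto simp: nbr_def)
        then show ?thesis using e by auto
      next
        case False then have "y \<in> nbr E A" using dom \<open>y \<in> C\<close> CD by (auto simp: nbr_def)
        then show ?thesis using e by auto
      qed
    qed
  qed
  then show ?thesis using A by blast
qed

lemma rtc_sym: "(adj E)\<^sup>*\<^sup>* x y \<Longrightarrow> (adj E)\<^sup>*\<^sup>* y x"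
proof (induction rule: rtranclp_induct)
  case base then show ?case by simp
next
  case (step y z)
  have "adj E z y" using step(2) by (rule adj_sym)
  from this step(3) show ?case by (rule converse_rtranclp_into_rtranclp)
qed

lemma component_eq: "(adj E)\<^sup>*\<^sup>* v w \<Longrightarrow> component E v = component E w"
proof -
  assume vw: "(adj E)\<^sup>*\<^sup>* v w"
  have wv: "(adj E)\<^sup>*\<^sup>* w v" using vw by (rule rtc_sym)
  show ?thesis unfolding component_def
  proof (intro set_eqI iffI; simp)
    fix u
    show "(adj E)\<^sup>*\<^sup>* v u \<Longrightarrow> (adj E)\<^sup>*\<^sup>* w u" using rtranclp_trans[OF wv] by blast
    show "(adj E)\<^sup>*\<^sup>* w u \<Longrightarrow> (adj E)\<^sup>*\<^sup>* v u" using rtranclp_trans[OF vw] by blast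
  qed
qed

lemma dichotomy:
  fixes E :: "('v::finite) set set"
  assumes sg: "simple_graph E" and C: "vertex_cover E C"
  shows "(\<forall>v. (\<exists>e\<in>E. v \<in> e) \<longrightarrow> is_star_on E (component E v))
     \<or> (\<exists>A. indep E A \<and> vertex_cover E (nbr E A) \<and> card A < card C)"
proof (cases "\<exists>c1\<in>C. \<exists>c2\<in>C. adj E c1 c2")
  case True
  then obtain c1 c2 where c: "c1 \<in> C" "c2 \<in> C" "adj E c1 c2" by blast
  have "indep E {c1}" by (simp add: indep_def adj_irrefl)
  then obtain A where A: "{c1} \<subseteq> A" "A \<subseteq> C" "indep E A" "vertex_cover E (nbr E A)"
    using construct[OF sg C, of C "{c1}"] c by auto
  have "c2 \<notin> A" using A c by (auto simp: indep_def)
  then have "A \<subseteq> C - {c2}" using A by auto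
  then have "card A \<le> card (C - {c2})" by (simp add: card_mono)
  also have "\<dots> < card C" using c by (intro card_Diff1_less) simp_all
  finally show ?thesis using A by blast
next
  case Cind: False
  show ?thesis
  proof (cases "\<exists>w. w \<notin> C \<and> (\<exists>c1\<in>C. \<exists>c2\<in>C. c1 \<noteq> c2 \<and> adj E w c1 \<and> adj E w c2)")
    case True
    then obtain w c1 c2 where c: "w \<notin> C" "c1 \<in> C" "c2 \<in> C" "c1 \<noteq> c2" "adj E w c1" "adj E w c2" by blast
    have "indep E {w}" by (simp add: indep_def adj_irrefl)
    then obtain A where A: "{w} \<subseteq> A" "A \<subseteq> insert w C" "indep E A" "vertex_cover E (nbr E A)"
      using construct[OF sg C, of "insert w C" "{w}"] by auto
    have "c1 \<notin> A" "c2 \<notin> A" using A c by (auto simp: indep_def)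
    then have "A \<subseteq> insert w (C - {c1, c2})" using A by auto
    then have "card A \<le> card (insert w (C - {c1, c2}))" by (simp add: card_mono)
    also have "\<dots> = Suc (card (C - {c1, c2}))" using c by simp
    also have "\<dots> = Suc (card C - 2)" using c by (simp add: card_Diff_subset)
    also have "\<dots> < card C"
    proof -
      have "card {c1, c2} \<le> card C" using c by (intro card_mono) auto
      then show ?thesis using c by simp
    qed
    finally show ?thesis using A by blast
  next
    case W: False
    show ?thesis
    proof (intro disjI1 allI impI)
      fix v assume "\<exists>e\<in>E. v \<in> e"
      then obtain e where "e \<in> E" "v \<in> e" by blast
      then obtain x y where xy: "e = {x, y}" "adj E x y" using edge_cases[OF sg] by blast
      obtain q where vq: "adj E v q" using xy \<open>v \<in> e\<close> adj_sym[of E x y] by blast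
      have inC: "a \<in> C \<or> b \<in> C" if "adj E a b" for a b
        using C that by (auto simp: vertex_cover_def adj_def)
      obtain c where c: "c \<in> C" "v = c \<or> adj E v c"
        using inC[OF vq] vq by blast
      obtain d where cd: "adj E c d"
        using c vq adj_sym[of E v c] by blast
      define S where "S = insert c {x. adj E c x}"
      have nC: "x \<notin> C" if "adj E c x" for x using Cind c that by blast
      have closed: "y \<in> S" if "x \<in> S" "adj E x y" for x y
      proof (cases "x = c")
        case True then show ?thesis using that by (auto simp: S_def)
      next
        case False
        then have xc: "adj E c x" using that by (auto simp: S_def)
        then have "x \<notin> C" by (rule nC)
        then have "y \<in> C" using inC[OF that(2)] by blast
        then have "y = c" using W \<open>x \<notin> C\<close> c(1) xc that(2) adj_sym[of E c x] by metis
        then show ?thesis by (simp add: S_def)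
      qed
      have sub: "(adj E)\<^sup>*\<^sup>* c y \<Longrightarrow> y \<in> S" for y
      proof (induction rule: rtranclp_induct)
        case base then show ?case by (simp add: S_def)
      next
        case (step y z) then show ?case using closed by blast
      qed
      have "component E v = component E c"
      proof (cases "v = c")
        case False
        then have "adj E v c" using c by simp
        then show ?thesis by (intro component_eq r_into_rtranclp)
      qed simp
      also have "component E c = S"
        using sub by (auto simp: component_def S_def)
      finally have comp: "component E v = S" .
      show "is_star_on E (component E v)" unfolding comp is_star_on_def
      proof (rule bexI[of _ c], intro conjI ballI impI)
        show "c \<in> S" by (simp add: S_def)
        have "d \<noteq> c" using cd adj_irrefl[of E c] by metis
        then have "d \<in> S - {c}" using cd by (simp add: S_def)
        then show "S - {c} \<noteq> {}" by blast
        show "{c, x} \<in> E" if "x \<in> S - {c}" for x using that by (auto simp: S_def adj_def)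
        show "c \<in> e'" if e'E: "e' \<in> E" "e' \<subseteq> S" for e'
        proof (rule ccontr)
          assume "c \<notin> e'"
          obtain a b where ab: "e' = {a, b}" "adj E a b" using edge_cases[OF sg e'E(1)] by blast
          have "adj E c a" "adj E c b" using ab e'E \<open>c \<notin> e'\<close> by (auto simp: S_def)
          then show False using nC inC[OF ab(2)] by blast
        qed
      qed
    qed
  qed
qed

lemma star_lower:
  fixes E :: "('v::finite) set set"
  assumes sg: "simple_graph E"
    and stars: "\<forall>v. (\<exists>e\<in>E. v \<in> e) \<longrightarrow> is_star_on E (component E v)"
    and T: "vertex_cover E T" and K: "\<forall>x\<in>T. \<exists>q. adj E x q \<and> q \<in> K"
  shows "cover_number E \<le> card K"
proof -
  define cen where "cen k = (SOME c. c \<in> component E k \<and> (\<forall>e\<in>E. e \<subseteq> component E k \<longrightarrow> c \<in> e))" for k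
  have cen: "\<forall>e\<in>E. e \<subseteq> component E k \<longrightarrow> cen k \<in> e" if "\<exists>e\<in>E. k \<in> e" for k
  proof -
    have "is_star_on E (component E k)" using stars that by blast
    then obtain c where c: "c \<in> component E k" "\<forall>e\<in>E. e \<subseteq> component E k \<longrightarrow> c \<in> e"
      unfolding is_star_on_def by blast
    have "cen k \<in> component E k \<and> (\<forall>e\<in>E. e \<subseteq> component E k \<longrightarrow> cen k \<in> e)"
      unfolding cen_def by (rule someI[of _ c]) (use c in blast)
    then show ?thesis by blast
  qed
  define C' where "C' = cen ` {k\<in>K. \<exists>e\<in>E. k \<in> e}"
  have "vertex_cover E C'" unfolding vertex_cover_def
  proof
    fix e assume "e \<in> E"
    then obtain x y where e: "e = {x, y}" "adj E x y" using edge_cases[OF sg] by blast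
    obtain t where t: "t \<in> T" "t \<in> e" using T \<open>e \<in> E\<close> by (auto simp: vertex_cover_def)
    obtain k where k: "adj E t k" "k \<in> K" using K t by blast
    have kE: "\<exists>e\<in>E. k \<in> e" using k by (auto simp: adj_def)
    have kt: "(adj E)\<^sup>*\<^sup>* k t" by (rule r_into_rtranclp[of "adj E", OF adj_sym[OF k(1)]])
    have "(adj E)\<^sup>*\<^sup>* k x \<and> (adj E)\<^sup>*\<^sup>* k y"
    proof (cases "t = x")
      case True
      then show ?thesis using rtranclp.rtrancl_into_rtrancl[OF kt, of y] kt e by simp
    next
      case False
      then have "t = y" using t e by auto
      then show ?thesis using rtranclp.rtrancl_into_rtrancl[OF kt, of x] kt e adj_sym[of E x y] by simp
    qed
    then have "e \<subseteq> component E k" using e by (auto simp: component_def)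
    then have "cen k \<in> e" using cen[OF kE] \<open>e \<in> E\<close> by blast
    moreover have "cen k \<in> C'" using k kE by (auto simp: C'_def)
    ultimately show "e \<inter> C' \<noteq> {}" by blast
  qed
  then have "cover_number E \<le> card C'" unfolding cover_number_def
    by (intro Least_le[where P = "\<lambda>n. \<exists>C. vertex_cover E C \<and> card C = n"]) blast
  also have "\<dots> \<le> card {k\<in>K. \<exists>e\<in>E. k \<in> e}" unfolding C'_def by (rule card_image_le) simp
  also have "\<dots> \<le> card K" by (rule card_mono) auto
  finally show ?thesis .
qed

theorem theorem4p1:
  fixes E :: "('v::finite) set set"
  assumes "simple_graph E" and "E \<noteq> {}"
  shows "v_number (edge_ideal E :: ('v, 'k::field) mpoly set) \<le> cover_number E
    \<and> (v_number (edge_ideal E :: ('v, 'k) mpoly set) = cover_number E \<longleftrightarrow>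
        (\<forall>v. (\<exists>e\<in>E. v \<in> e) \<longrightarrow> is_star_on E (component E v)))"
proof -
  note sg = assms(1)
  let ?I = "edge_ideal E :: ('v, 'k) mpoly set"
  let ?Q = "\<lambda>d. \<exists>f P. homogeneous_of_deg d f \<and> P \<in> Ass ?I \<and> colon ?I f = P"
  have wit: "?Q (card A)" if A: "indep E A" "vertex_cover E (nbr E A)" for A
  proof -
    have col: "colon ?I (Poly_Mapping.single (mA A) 1) = vars_ideal (nbr E A)"
      using colon_indep[of A E] A unfolding indep_def nbr_def by blast
    have "homogeneous_of_deg (card A) (Poly_Mapping.single (mA A) (1::'k))"
      by (simp add: homogeneous_of_deg_def mon_deg_mA)
    moreover have "vars_ideal (nbr E A) \<in> Ass ?I"
      using prime_vars_ideal col by (auto simp: Ass_def)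
    ultimately show ?thesis using col by blast
  qed
  have witv: "v_number ?I \<le> card A" if "indep E A" "vertex_cover E (nbr E A)" for A
    unfolding v_number_def by (rule Least_le[where P = ?Q]) (rule wit[OF that])
  have "vertex_cover E UNIV" using sg by (auto simp: vertex_cover_def simple_graph_def)
  then have "\<exists>n C. vertex_cover E C \<and> card C = n" by blast
  then have "\<exists>C. vertex_cover E C \<and> card C = cover_number E"
    unfolding cover_number_def by (rule LeastI_ex[where P = "\<lambda>n. \<exists>C. vertex_cover E C \<and> card C = n"])
  then obtain C0 where C0: "vertex_cover E C0" "card C0 = cover_number E" by blast
  obtain A0 where A0: "A0 \<subseteq> C0" "indep E A0" "vertex_cover E (nbr E A0)"
    using construct[OF sg C0(1), of C0 "{}"] by (auto simp: indep_def)
  have "card A0 \<le> card C0" using A0 by (simp add: card_mono)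
  then have le: "v_number ?I \<le> cover_number E" using witv[OF A0(2,3)] C0 by simp
  have ge: "cover_number E \<le> v_number ?I"
    if stars: "\<forall>v. (\<exists>e\<in>E. v \<in> e) \<longrightarrow> is_star_on E (component E v)"
  proof -
    have "?Q (v_number ?I)" unfolding v_number_def by (rule LeastI_ex[where P = ?Q]) (use wit[OF A0(2,3)] in blast)
    then obtain f P where f: "homogeneous_of_deg (v_number ?I) f" "P \<in> Ass ?I" "colon ?I f = P" by blast
    then have "prime_ideal (colon ?I f)" by (simp add: Ass_def)
    then obtain u T where u: "u \<in> Poly_Mapping.keys f" "vertex_cover E T"
      "\<forall>x\<in>T. \<exists>q. adj E x q \<and> q \<in> Poly_Mapping.keys u"
      using colon_lower[OF sg] by blast
    have "cover_number E \<le> card (Poly_Mapping.keys u)"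
      using star_lower[OF sg stars u(2)] u(3) by blast
    also have "\<dots> \<le> mon_deg u" by (rule mon_deg_ge)
    also have "\<dots> = v_number ?I" using f(1) u(1) by (simp add: homogeneous_of_deg_def)
    finally show ?thesis .
  qed
  have "(v_number ?I = cover_number E) \<longleftrightarrow> (\<forall>v. (\<exists>e\<in>E. v \<in> e) \<longrightarrow> is_star_on E (component E v))"
  proof
    assume eq: "v_number ?I = cover_number E"
    show "\<forall>v. (\<exists>e\<in>E. v \<in> e) \<longrightarrow> is_star_on E (component E v)"
    proof (rule ccontr)
      assume ns: "\<not> ?thesis"
      then obtain A where "indep E A" "vertex_cover E (nbr E A)" "card A < card C0"
        using dichotomy[OF sg C0(1)] by blast
      then show False using witv eq C0(2) by fastforce
    qed
  next
    assume "\<forall>v. (\<exists>e\<in>E. v \<in> e) \<longrightarrow> is_star_on E (component E v)"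
    then show "v_number ?I = cover_number E" using ge le by simp
  qed
  then show ?thesis using le by simp
qed

end
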